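(* Let $\gamma_1,\dots,\gamma_n\in\mathcal{M}_k\otimes\mathcal{M}_k$ be states with $\mathcal{R}(\gamma_i)=\gamma_i$ for $i=1,\dots,n$. Then there is no vector $v=a\otimes b+c\otimes d\in\mathbb{C}^{k^n}\otimes\mathbb{C}^{k^n}$ with $a,b,c,d\in\mathbb{C}^{k^n}$, $\dim\mathrm{span}\{a,b,c,d\}=2$, such that $\mathrm{tr}\big(S(\gamma_1^\Gamma,\dots,\gamma_n^\Gamma)vv^*\big)<0$. In particular this holds with $\gamma_1=\cdots=\gamma_n$.
   Context: $\mathcal{M}_k$ denotes complex $k\times k$ matrices; $\mathcal{M}_k\otimes\mathcal{M}_m\cong\mathcal{M}_{km}$ via the Kronecker product. A state is a positive semidefinite Hermitian matrix (not necessarily of trace one). Partial transpose: $(\sum_iA_i\otimes B_i)^\Gamma=\sum_iA_i\otimes B_i^t$. Realignment on $\mathcal{M}_k\otimes\mathcal{M}_k$: identify $\mathcal{M}_k$ with $\mathbb{C}^k\otimes\mathbb{C}^k$ via $\mathrm{vec}(vw^t)=v\otimes w$ (extended linearly), and set $\mathcal{R}(A\otimes B)=\mathrm{vec}(A)\mathrm{vec}(B)^t$, extended linearly. Shuffle: if $\gamma_i=\sum_{j=1}^{n_i}A^i_j\otimes B^i_j\in\mathcal{M}_{k}\otimes\mathcal{M}_{k}$, then $S(\gamma_1,\dots,\gamma_n)=\sum_{j_1,\dots,j_n}A^1_{j_1}\otimes\cdots\otimes A^n_{j_n}\otimes B^1_{j_1}\otimes\cdots\otimes B^n_{j_n}\in\mathcal{M}_{k^n}\otimes\mathcal{M}_{k^n}$.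 *)

theory Defs
  imports "Jordan_Normal_Form.Schur_Decomposition" "Jordan_Normal_Form.DL_Rank"
begin

(* Conventions: M_k (x) M_k = M_{k*k}, the basis vector e_i (x) e_j (i,j<k) has
   flat index i*k+j (Kronecker ordering).  Likewise C^{k^n} (x) C^{k^n} = C^{k^n*k^n}. *)

definition trace :: "complex mat \<Rightarrow> complex" where
  "trace A = (\<Sum>i<dim_row A. A $$ (i,i))"

(* state = positive semidefinite Hermitian matrix (trace not normalised) *)
definition is_state :: "nat \<Rightarrow> complex mat \<Rightarrow> bool" where
  "is_state m A \<longleftrightarrow> A \<in> carrier_mat m m \<and> mat_adjoint A = A \<and>
     (\<forall>x \<in> carrier_vec m. 0 \<le> (A *\<^sub>v x) \<bullet>c x)"

(* partial transpose on M_k (x) M_k:  (A (x) B)^Gamma = A (x) B^t *)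
definition ptrans :: "nat \<Rightarrow> complex mat \<Rightarrow> complex mat" where
  "ptrans k G = mat (k*k) (k*k)
     (\<lambda>(r,c). G $$ ((r div k) * k + c mod k, (c div k) * k + r mod k))"

(* realignment: R(A (x) B) = vec(A) vec(B)^t with vec(A) indexed by (i,i') = A_{i i'} *)
definition realign :: "nat \<Rightarrow> complex mat \<Rightarrow> complex mat" where
  "realign k G = mat (k*k) (k*k)
     (\<lambda>(r,c). G $$ ((r div k) * k + c div k, (r mod k) * k + c mod k))"

(* m-th digit (m < n, most significant first) of a multi-index I < k^n *)
definition digit :: "nat \<Rightarrow> nat \<Rightarrow> nat \<Rightarrow> nat \<Rightarrow> nat" where
  "digit k n m I = (I div k ^ (n - 1 - m)) mod k"

(* shuffle S(g_0,...,g_{n-1}) in M_{k^n} (x) M_{k^n}, written in coordinates: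
   the entry at row (I,J), column (I',J') is prod_m g_m((I_m,J_m),(I'_m,J'_m)) *)
definition shuffle :: "nat \<Rightarrow> nat \<Rightarrow> (nat \<Rightarrow> complex mat) \<Rightarrow> complex mat" where
  "shuffle k n g = (let N = k ^ n in mat (N*N) (N*N)
     (\<lambda>(r,c). \<Prod>m<n. g m $$ (digit k n m (r div N) * k + digit k n m (r mod N),
                                digit k n m (c div N) * k + digit k n m (c mod N))))"

definition kron_vec :: "nat \<Rightarrow> complex vec \<Rightarrow> complex vec \<Rightarrow> complex vec" where
  "kron_vec N a b = vec (N*N) (\<lambda>x. a $ (x div N) * b $ (x mod N))"

definition outer :: "complex vec \<Rightarrow> complex mat" where
  "outer v = mat (dim_vec v) (dim_vec v) (\<lambda>(i,j). v $ i * cnj (v $ j))"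

end

theory Submission
  imports Defs
begin


definition Qf :: "nat \<Rightarrow> (nat\<Rightarrow>nat\<Rightarrow>nat\<Rightarrow>nat\<Rightarrow>complex) \<Rightarrow> (nat\<Rightarrow>nat\<Rightarrow>complex) \<Rightarrow> (nat\<Rightarrow>nat\<Rightarrow>complex) \<Rightarrow> complex" where
  "Qf N G f g = (\<Sum>I<N. \<Sum>J<N. \<Sum>I'<N. \<Sum>J'<N. cnj (f I J) * G I J I' J' * g I' J')"

lemma Qf_lin_r: "Qf N G f (\<lambda>I J. \<alpha> * g I J + \<beta> * h I J) = \<alpha> * Qf N G f g + \<beta> * Qf N G f h"
  unfolding Qf_def by (simp add: sum_distrib_left sum.distrib algebra_simps)

lemma Qf_lin_l: "Qf N G (\<lambda>I J. \<alpha> * g I J + \<beta> * h I J) f = cnj \<alpha> * Qf N G g f + cnj \<beta> * Qf N G h f"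
  unfolding Qf_def by (simp add: sum_distrib_left sum.distrib algebra_simps)

lemma sum4_perm: "(\<Sum>a<(N::nat). \<Sum>b<N. \<Sum>c<N. \<Sum>d<N. F a b c d) = (\<Sum>c<N. \<Sum>d<N. \<Sum>a<N. \<Sum>b<N. F a b c d)"
proof -
  have "(\<Sum>a<N. \<Sum>b<N. \<Sum>c<N. \<Sum>d<N. F a b c d) = (\<Sum>a<N. \<Sum>c<N. \<Sum>b<N. \<Sum>d<N. F a b c d)"
    by (rule sum.cong, simp, rule sum.swap)
  also have "\<dots> = (\<Sum>c<N. \<Sum>a<N. \<Sum>b<N. \<Sum>d<N. F a b c d)" by (rule sum.swap)
  also have "\<dots> = (\<Sum>c<N. \<Sum>a<N. \<Sum>d<N. \<Sum>b<N. F a b c d)"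
    by (rule sum.cong, simp, rule sum.cong, simp, rule sum.swap)
  also have "\<dots> = (\<Sum>c<N. \<Sum>d<N. \<Sum>a<N. \<Sum>b<N. F a b c d)"
    by (rule sum.cong, simp, rule sum.swap)
  finally show ?thesis .
qed

lemma Qf_herm:
  assumes GH: "\<And>I J I' J'. I<N \<Longrightarrow> J<N \<Longrightarrow> I'<N \<Longrightarrow> J'<N \<Longrightarrow> G I' J' I J = cnj (G I J I' J')"
  shows "Qf N G g f = cnj (Qf N G f g)"
proof -
  have "cnj (Qf N G f g) = (\<Sum>I<N. \<Sum>J<N. \<Sum>I'<N. \<Sum>J'<N. cnj (cnj (f I J) * G I J I' J' * g I' J'))"
    unfolding Qf_def by (simp only: cnj_sum)
  also have "\<dots> = (\<Sum>I<N. \<Sum>J<N. \<Sum>I'<N. \<Sum>J'<N. cnj (g I' J') * G I' J' I J * f I J)"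
    by (intro sum.cong refl) (simp add: GH[symmetric])
  also have "\<dots> = (\<Sum>I'<N. \<Sum>J'<N. \<Sum>I<N. \<Sum>J<N. cnj (g I' J') * G I' J' I J * f I J)"
    by (rule sum4_perm)
  also have "\<dots> = Qf N G g f" unfolding Qf_def by simp
  finally show ?thesis by simp
qed

lemma cs_real:
  fixes a b :: real and c :: complex
  assumes H: "\<And>\<alpha> \<beta>::complex. 0 \<le> (cmod \<alpha>)^2 * a + 2 * Re (cnj \<alpha> * \<beta> * c) + (cmod \<beta>)^2 * b"
    and a: "a \<ge> 0" and b: "b \<ge> 0"
  shows "(cmod c)^2 \<le> a * b"
proof (cases "b > 0")
  case True
  have "0 \<le> (cmod (of_real b))^2 * a + 2 * Re (cnj (of_real b) * (- cnj c) * c) + (cmod (- cnj c))^2 * b"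
    by (rule H)
  also have "cnj (of_real b) * (- cnj c) * c = - of_real (b * (cmod c)^2)"
  proof -
    have "c * cnj c = of_real ((cmod c)^2)" using complex_norm_square[of c] by simp
    thus ?thesis by (simp add: algebra_simps)
  qed
  finally have "0 \<le> b * (a * b - (cmod c)^2)" using b by (simp add: power2_eq_square algebra_simps)
  with True show ?thesis by (simp add: zero_le_mult_iff)
next
  case False
  hence b0: "b = 0" using b by simp
  show ?thesis
  proof (rule ccontr)
    assume "\<not> ?thesis"
    hence cpos: "(cmod c)^2 > 0" using b0 by simp
    define t where "t = (a + 1) / (cmod c)^2"
    have "0 \<le> (cmod 1)^2 * a + 2 * Re (cnj 1 * (- of_real t * cnj c) * c) + (cmod (- of_real t * cnj c))^2 * b"
      by (rule H)
    also have "cnj 1 * (- of_real t * cnj c) * c = - of_real (t * (cmod c)^2)"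
    proof -
      have "c * cnj c = of_real ((cmod c)^2)" using complex_norm_square[of c] by simp
      thus ?thesis by (simp add: algebra_simps)
    qed
    finally have "0 \<le> a - 2 * (t * (cmod c)^2)" using b0 by simp
    also have "t * (cmod c)^2 = a + 1" using cpos unfolding t_def by simp
    finally show False using a by simp
  qed
qed

lemma re_aux: "Re (of_real x * p + w + cnj w + of_real y * q) = x * Re p + 2 * Re w + y * Re q"
  by simp

lemma Qf_cs:
  assumes GH: "\<And>I J I' J'. I<N \<Longrightarrow> J<N \<Longrightarrow> I'<N \<Longrightarrow> J'<N \<Longrightarrow> G I' J' I J = cnj (G I J I' J')"
    and GP: "\<And>f. 0 \<le> Qf N G f f"
  shows "(cmod (Qf N G f g))^2 \<le> Re (Qf N G f f) * Re (Qf N G g g)"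
proof (rule cs_real)
  fix \<alpha> \<beta> :: complex
  let ?h = "\<lambda>I J. \<alpha> * f I J + \<beta> * g I J"
  have "Qf N G ?h ?h = cnj \<alpha> * (\<alpha> * Qf N G f f + \<beta> * Qf N G f g) + cnj \<beta> * (\<alpha> * Qf N G g f + \<beta> * Qf N G g g)"
    by (simp add: Qf_lin_l Qf_lin_r)
  also have "Qf N G g f = cnj (Qf N G f g)" by (rule Qf_herm[OF GH])
  finally have e: "Qf N G ?h ?h = cnj \<alpha> * \<alpha> * Qf N G f f + cnj \<alpha> * \<beta> * Qf N G f g + cnj (cnj \<alpha> * \<beta> * Qf N G f g) + cnj \<beta> * \<beta> * Qf N G g g"
    by (simp add: algebra_simps)
  have "0 \<le> Re (Qf N G ?h ?h)" using GP[of ?h] by (simp add: less_eq_complex_def)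
  also have "Re (Qf N G ?h ?h) = (cmod \<alpha>)^2 * Re (Qf N G f f) + 2 * Re (cnj \<alpha> * \<beta> * Qf N G f g) + (cmod \<beta>)^2 * Re (Qf N G g g)"
  proof -
    have a1: "cnj \<alpha> * \<alpha> = of_real ((cmod \<alpha>)^2)" using complex_norm_square[of \<alpha>] by (simp add: mult.commute)
    have b1: "cnj \<beta> * \<beta> = of_real ((cmod \<beta>)^2)" using complex_norm_square[of \<beta>] by (simp add: mult.commute)
    show ?thesis unfolding e a1 b1 by (rule re_aux)
  qed
  finally show "0 \<le> (cmod \<alpha>)^2 * Re (Qf N G f f) + 2 * Re (cnj \<alpha> * \<beta> * Qf N G f g) + (cmod \<beta>)^2 * Re (Qf N G g g)" .
next
  show "0 \<le> Re (Qf N G f f)" using GP[of f] by (simp add: less_eq_complex_def)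
  show "0 \<le> Re (Qf N G g g)" using GP[of g] by (simp add: less_eq_complex_def)
qed


definition Tw :: "nat \<Rightarrow> (nat\<Rightarrow>nat\<Rightarrow>nat\<Rightarrow>nat\<Rightarrow>complex) \<Rightarrow> (nat\<Rightarrow>nat\<Rightarrow>complex) \<Rightarrow> (nat\<Rightarrow>nat\<Rightarrow>complex) \<Rightarrow> complex" where
  "Tw N G f g = (\<Sum>I<N. \<Sum>J<N. \<Sum>I'<N. \<Sum>J'<N. cnj (f I J) * G I J' I' J * g I' J')"

lemma sum3_perm: "(\<Sum>a<(N::nat). \<Sum>b<N. \<Sum>c<N. F a b c) = (\<Sum>c<N. \<Sum>b<N. \<Sum>a<N. F a b c)"
proof -
  have "(\<Sum>a<N. \<Sum>b<N. \<Sum>c<N. F a b c) = (\<Sum>b<N. \<Sum>a<N. \<Sum>c<N. F a b c)" by (rule sum.swap)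
  also have "\<dots> = (\<Sum>b<N. \<Sum>c<N. \<Sum>a<N. F a b c)" by (rule sum.cong, simp, rule sum.swap)
  also have "\<dots> = (\<Sum>c<N. \<Sum>b<N. \<Sum>a<N. F a b c)" by (rule sum.swap)
  finally show ?thesis .
qed

lemma Tw_lin_r: "Tw N G f (\<lambda>I J. \<alpha> * g I J + \<beta> * h I J) = \<alpha> * Tw N G f g + \<beta> * Tw N G f h"
  unfolding Tw_def by (simp add: sum_distrib_left sum.distrib algebra_simps)

lemma Tw_lin_l: "Tw N G (\<lambda>I J. \<alpha> * g I J + \<beta> * h I J) f = cnj \<alpha> * Tw N G g f + cnj \<beta> * Tw N G h f"
  unfolding Tw_def by (simp add: sum_distrib_left sum.distrib algebra_simps)

lemma Tw_add_r: "Tw N G f (\<lambda>I J. g I J + h I J) = Tw N G f g + Tw N G f h"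
  using Tw_lin_r[of N G f 1 g 1 h] by simp

lemma Tw_add_l: "Tw N G (\<lambda>I J. g I J + h I J) f = Tw N G g f + Tw N G h f"
  using Tw_lin_l[of N G 1 g 1 h f] by simp

lemma Tw_cong: "(\<And>I J. I < N \<Longrightarrow> J < N \<Longrightarrow> f I J = f' I J) \<Longrightarrow> (\<And>I J. I < N \<Longrightarrow> J < N \<Longrightarrow> g I J = g' I J)
   \<Longrightarrow> Tw N G f g = Tw N G f' g'"
  unfolding Tw_def by (intro sum.cong refl) auto

lemma Tw_as_Qf:
  "Tw N G (\<lambda>I J. x I * x' J) (\<lambda>I J. y I * y' J) = Qf N G (\<lambda>I J. x I * cnj (y' J)) (\<lambda>I J. y I * cnj (x' J))"
proof -
  have "Tw N G (\<lambda>I J. x I * x' J) (\<lambda>I J. y I * y' J) =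
     (\<Sum>I<N. \<Sum>J<N. \<Sum>I'<N. \<Sum>J'<N. cnj (x I * x' J) * G I J' I' J * (y I' * y' J'))"
    unfolding Tw_def by simp
  also have "\<dots> = (\<Sum>I<N. \<Sum>J'<N. \<Sum>I'<N. \<Sum>J<N. cnj (x I * x' J) * G I J' I' J * (y I' * y' J'))"
    by (rule sum.cong, simp, rule sum3_perm)
  also have "\<dots> = Qf N G (\<lambda>I J. x I * cnj (y' J)) (\<lambda>I J. y I * cnj (x' J))"
    unfolding Qf_def by (intro sum.cong refl) (simp add: mult_ac)
  finally show ?thesis .
qed

lemma Qf_R:
  assumes GR: "\<And>I J I' J'. I<N \<Longrightarrow> J<N \<Longrightarrow> I'<N \<Longrightarrow> J'<N \<Longrightarrow> G I J I' J' = G I I' J J'"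
  shows "Qf N G (\<lambda>I J. x I * x' J) (\<lambda>I J. y I * y' J) = Qf N G (\<lambda>I J. x I * cnj (y J)) (\<lambda>I J. cnj (x' I) * y' J)"
proof -
  have "Qf N G (\<lambda>I J. x I * x' J) (\<lambda>I J. y I * y' J) =
     (\<Sum>I<N. \<Sum>J<N. \<Sum>I'<N. \<Sum>J'<N. cnj (x I * x' J) * G I J I' J' * (y I' * y' J'))"
    unfolding Qf_def by simp
  also have "\<dots> = (\<Sum>I<N. \<Sum>I'<N. \<Sum>J<N. \<Sum>J'<N. cnj (x I * x' J) * G I J I' J' * (y I' * y' J'))"
    by (rule sum.cong, simp, rule sum.swap)
  also have "\<dots> = (\<Sum>I<N. \<Sum>I'<N. \<Sum>J<N. \<Sum>J'<N. cnj (x I * x' J) * G I I' J J' * (y I' * y' J'))"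
    by (intro sum.cong refl) (simp add: GR)
  also have "\<dots> = Qf N G (\<lambda>I J. x I * cnj (y J)) (\<lambda>I J. cnj (x' I) * y' J)"
    unfolding Qf_def by (intro sum.cong refl) (simp add: mult_ac)
  finally show ?thesis .
qed


lemma fin_arith:
  fixes a b d :: real and C :: complex
  assumes "a \<ge> 0" "b \<ge> 0" "d \<ge> 0" "(cmod C)^2 \<le> d * d" "d * d \<le> a * b"
  shows "0 \<le> a + b + 2 * Re C"
proof -
  have c1: "cmod C \<le> d" using power2_le_imp_le[of "cmod C" d] assms(3,4) by (simp add: power2_eq_square)
  have c2: "- Re C \<le> cmod C" using abs_Re_le_cmod[of C] by linarith
  have q1: "(2*d)^2 = 4*(d*d)" by (simp add: power2_eq_square)
  have q2: "(a+b)^2 = 4*(a*b) + (a-b)^2" by (simp add: power2_eq_square algebra_simps)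
  have "(2*d)^2 \<le> (a+b)^2" unfolding q1 q2 using assms(5) zero_le_power2[of "a-b"] by linarith
  hence "2*d \<le> a+b" using power2_le_imp_le[of "2*d" "a+b"] assms(1,2) by simp
  with c1 c2 show ?thesis by linarith
qed

lemma Tw_T_r:
  assumes GR: "\<And>I J I' J'. I<N \<Longrightarrow> J<N \<Longrightarrow> I'<N \<Longrightarrow> J'<N \<Longrightarrow> G I J I' J' = G I I' J J'"
  shows "Tw N G f (\<lambda>I J. g J I) = Tw N G f g"
proof -
  have "Tw N G f (\<lambda>I J. g J I) = (\<Sum>I<N. \<Sum>J<N. \<Sum>I'<N. \<Sum>J'<N. cnj (f I J) * G I J' I' J * g J' I')"
    unfolding Tw_def by simp
  also have "\<dots> = (\<Sum>I<N. \<Sum>J<N. \<Sum>J'<N. \<Sum>I'<N. cnj (f I J) * G I J' I' J * g J' I')"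
    by (rule sum.cong, simp, rule sum.cong, simp, rule sum.swap)
  also have "\<dots> = (\<Sum>I<N. \<Sum>J<N. \<Sum>J'<N. \<Sum>I'<N. cnj (f I J) * G I I' J' J * g J' I')"
    by (intro sum.cong refl) (simp add: GR)
  also have "\<dots> = Tw N G f g" unfolding Tw_def by simp
  finally show ?thesis .
qed

lemma Tw_herm:
  assumes GH: "\<And>I J I' J'. I<N \<Longrightarrow> J<N \<Longrightarrow> I'<N \<Longrightarrow> J'<N \<Longrightarrow> G I' J' I J = cnj (G I J I' J')"
  shows "Tw N G g f = cnj (Tw N G f g)"
proof -
  have "cnj (Tw N G f g) = (\<Sum>I<N. \<Sum>J<N. \<Sum>I'<N. \<Sum>J'<N. cnj (cnj (f I J) * G I J' I' J * g I' J'))"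
    unfolding Tw_def by (simp only: cnj_sum)
  also have "\<dots> = (\<Sum>I<N. \<Sum>J<N. \<Sum>I'<N. \<Sum>J'<N. cnj (g I' J') * G I' J I J' * f I J)"
    by (intro sum.cong refl) (simp add: GH[symmetric])
  also have "\<dots> = (\<Sum>I'<N. \<Sum>J'<N. \<Sum>I<N. \<Sum>J<N. cnj (g I' J') * G I' J I J' * f I J)"
    by (rule sum4_perm)
  also have "\<dots> = Tw N G g f" unfolding Tw_def by simp
  finally show ?thesis by simp
qed

lemma core:
  assumes GR: "\<And>I J I' J'. I<N \<Longrightarrow> J<N \<Longrightarrow> I'<N \<Longrightarrow> J'<N \<Longrightarrow> G I J I' J' = G I I' J J'"
    and GH: "\<And>I J I' J'. I<N \<Longrightarrow> J<N \<Longrightarrow> I'<N \<Longrightarrow> J'<N \<Longrightarrow> G I' J' I J = cnj (G I J I' J')"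
    and GP: "\<And>f. 0 \<le> Qf N G f f"
    and sym: "\<And>I J. I<N \<Longrightarrow> J<N \<Longrightarrow> v I J + v J I = 2 * (y1 I * y1 J + y2 I * y2 J)"
  shows "0 \<le> Re (Tw N G v v)"
proof -
  let ?vt = "\<lambda>I J. v J I"
  let ?s = "\<lambda>I J. (1/2) * v I J + (1/2) * ?vt I J"
  let ?p = "\<lambda>I J. y1 I * y1 J + y2 I * y2 J"
  have TL: "Tw N G (\<lambda>I J. f J I) g = Tw N G f g" for f g
  proof -
    have "Tw N G (\<lambda>I J. f J I) g = cnj (Tw N G g (\<lambda>I J. f J I))" by (rule Tw_herm[OF GH])
    also have "Tw N G g (\<lambda>I J. f J I) = Tw N G g f" by (rule Tw_T_r[OF GR])
    also have "cnj (Tw N G g f) = Tw N G f g" using Tw_herm[OF GH, where g=f and f=g] by simp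
    finally show ?thesis .
  qed
  have s1: "Tw N G ?s ?s = 1/2 * Tw N G ?s v + 1/2 * Tw N G ?s ?vt" by (rule Tw_lin_r)
  have s2: "Tw N G ?s ?vt = Tw N G ?s v" by (rule Tw_T_r[OF GR])
  have s3: "Tw N G ?s v = cnj (1/2) * Tw N G v v + cnj (1/2) * Tw N G ?vt v" by (rule Tw_lin_l)
  have s4: "Tw N G ?vt v = Tw N G v v" by (rule TL)
  have e1: "Tw N G ?s ?s = Tw N G v v" unfolding s1 s2 s3 s4 by simp
  have e2: "Tw N G ?s ?s = Tw N G ?p ?p"
  proof (rule Tw_cong)
    fix I J assume IJ: "I < N" "J < N"
    have "(1/2) * v I J + (1/2) * v J I = (1/2) * (v I J + v J I)" by (simp add: algebra_simps)
    also have "\<dots> = (1/2) * (2 * (y1 I * y1 J + y2 I * y2 J))" using sym[OF IJ] by simp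
    also have "\<dots> = y1 I * y1 J + y2 I * y2 J" by simp
    finally show "?s I J = ?p I J" .
    thus "?s I J = ?p I J" .
  qed
  let ?e = "\<lambda>a b I J. a I * cnj (b J)"
  have e3: "Tw N G ?p ?p = Qf N G (?e y1 y1) (?e y1 y1) + Qf N G (?e y1 y2) (?e y2 y1)
        + Qf N G (?e y2 y1) (?e y1 y2) + Qf N G (?e y2 y2) (?e y2 y2)"
    by (simp add: Tw_add_l Tw_add_r Tw_as_Qf)
  define A where "A = Qf N G (?e y1 y1) (?e y1 y1)"
  define B where "B = Qf N G (?e y2 y2) (?e y2 y2)"
  define C where "C = Qf N G (?e y1 y2) (?e y2 y1)"
  define D where "D = Qf N G (?e y1 y1) (?e y2 y2)"
  have h1: "Qf N G (?e y2 y1) (?e y1 y2) = cnj C" unfolding C_def by (rule Qf_herm[OF GH])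
  have h2: "Qf N G (?e y1 y2) (?e y1 y2) = D"
    unfolding D_def using Qf_R[OF GR, where x=y1 and x'="\<lambda>J. cnj (y2 J)" and y=y1 and y'="\<lambda>J. cnj (y2 J)"] by simp
  have h3: "Qf N G (?e y2 y1) (?e y2 y1) = cnj D"
  proof -
    have "Qf N G (?e y2 y1) (?e y2 y1) = Qf N G (?e y2 y2) (?e y1 y1)"
      using Qf_R[OF GR, where x=y2 and x'="\<lambda>J. cnj (y1 J)" and y=y2 and y'="\<lambda>J. cnj (y1 J)"] by simp
    also have "\<dots> = cnj D" unfolding D_def by (rule Qf_herm[OF GH])
    finally show ?thesis .
  qed
  have cs1: "(cmod C)^2 \<le> Re D * Re D"
    using Qf_cs[OF GH GP, where f="?e y1 y2" and g="?e y2 y1"] unfolding C_def[symmetric] h2 h3 by simp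
  have cs2: "(cmod D)^2 \<le> Re A * Re B"
    using Qf_cs[OF GH GP, where f="?e y1 y1" and g="?e y2 y2"] unfolding D_def[symmetric] A_def[symmetric] B_def[symmetric] .
  have Dpos: "Re D \<ge> 0" using GP[of "?e y1 y2"] unfolding h2 by (simp add: less_eq_complex_def)
  have Apos: "Re A \<ge> 0" using GP[of "?e y1 y1"] unfolding A_def by (simp add: less_eq_complex_def)
  have Bpos: "Re B \<ge> 0" using GP[of "?e y2 y2"] unfolding B_def by (simp add: less_eq_complex_def)
  have "Re D * Re D \<le> (cmod D)^2" using abs_Re_le_cmod[of D] Dpos
    by (simp add: power2_eq_square mult_mono)
  with cs2 have dd: "Re D * Re D \<le> Re A * Re B" by linarith
  have "Tw N G v v = Tw N G ?p ?p" using e1 e2 by simp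
  also have "\<dots> = A + C + cnj C + B" unfolding e3 h1 A_def B_def C_def by simp
  finally have "Re (Tw N G v v) = Re A + Re B + 2 * Re C" by simp
  also have "0 \<le> \<dots>" by (rule fin_arith[OF Apos Bpos Dpos cs1 dd])
  finally show ?thesis by simp
qed


definition Qk :: "nat \<Rightarrow> (nat \<Rightarrow> nat \<Rightarrow> complex) \<Rightarrow> (nat \<Rightarrow> complex) \<Rightarrow> complex" where
  "Qk D K f = (\<Sum>x<D. \<Sum>y<D. cnj (f x) * K x y * f y)"

lemma Qk_shift:
  assumes "z < D"
  shows "Qk D K (\<lambda>x. f x + (if x = z then t else 0)) =
    Qk D K f + cnj t * (\<Sum>y<D. K z y * f y) + t * (\<Sum>x<D. cnj (f x) * K x z) + cnj t * t * K z z"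
proof -
  have inner: "(\<Sum>y<D. K x y * (f y + (if y = z then t else 0))) = (\<Sum>y<D. K x y * f y) + K x z * t" for x
  proof -
    have a: "\<And>y. K x y * (f y + (if y = z then t else 0)) = K x y * f y + (if y = z then K x y * t else 0)"
      by (simp add: distrib_left)
    show ?thesis unfolding a sum.distrib using assms by simp
  qed
  have "Qk D K (\<lambda>x. f x + (if x = z then t else 0)) =
      (\<Sum>x<D. cnj (f x + (if x = z then t else 0)) * ((\<Sum>y<D. K x y * f y) + K x z * t))"
    unfolding Qk_def by (simp add: mult.assoc sum_distrib_left[symmetric] inner)
  also have "\<dots> = (\<Sum>x<D. cnj (f x) * (\<Sum>y<D. K x y * f y) + cnj (f x) * K x z * t
      + (if x = z then cnj t * ((\<Sum>y<D. K z y * f y) + K z z * t) else 0))"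
    by (rule sum.cong) (auto simp: algebra_simps)
  also have "\<dots> = (\<Sum>x<D. cnj (f x) * (\<Sum>y<D. K x y * f y)) + (\<Sum>x<D. cnj (f x) * K x z) * t
      + cnj t * ((\<Sum>y<D. K z y * f y) + K z z * t)"
    using assms by (simp add: sum.distrib sum_distrib_right)
  also have "(\<Sum>x<D. cnj (f x) * (\<Sum>y<D. K x y * f y)) = Qk D K f"
    unfolding Qk_def by (simp add: sum_distrib_left mult.assoc)
  finally show ?thesis by (simp add: algebra_simps)
qed

lemma Qk_zero: "Qk D K (\<lambda>x. 0) = 0" unfolding Qk_def by simp

lemma Qk_delta:
  assumes "z < D"
  shows "Qk D K (\<lambda>x. if x = z then t else 0) = cnj t * t * K z z"
  using Qk_shift[OF assms, of K "\<lambda>x. 0" t] by (simp add: Qk_zero)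

lemma Qk_two:
  assumes "x < D" "z < D" "x \<noteq> z"
  shows "Qk D K (\<lambda>w. (if w = x then a else 0) + (if w = z then b else 0)) =
     cnj a * a * K x x + cnj b * a * K z x + b * cnj a * K x z + cnj b * b * K z z"
proof -
  have "Qk D K (\<lambda>w. (if w = x then a else 0) + (if w = z then b else 0)) =
    Qk D K (\<lambda>w. if w = x then a else 0) + cnj b * (\<Sum>y<D. K z y * (if y = x then a else 0))
     + b * (\<Sum>w<D. cnj (if w = x then a else 0) * K w z) + cnj b * b * K z z"
    by (rule Qk_shift[OF assms(2)])
  also have "(\<Sum>y<D. K z y * (if y = x then a else 0)) = K z x * a"
  proof -
    have "\<And>y. K z y * (if y = x then a else 0) = (if y = x then K z x * a else 0)" by simp
    thus ?thesis using assms by simp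
  qed
  also have "(\<Sum>w<D. cnj (if w = x then a else 0) * K w z) = cnj a * K x z"
  proof -
    have "\<And>w. cnj (if w = x then a else 0) * K w z = (if w = x then cnj a * K x z else 0)" by simp
    thus ?thesis using assms by simp
  qed
  finally show ?thesis using Qk_delta[OF assms(1), of K a] by (simp add: algebra_simps)
qed

definition hermK :: "nat \<Rightarrow> (nat \<Rightarrow> nat \<Rightarrow> complex) \<Rightarrow> bool" where
  "hermK D K \<longleftrightarrow> (\<forall>x<D. \<forall>y<D. K y x = cnj (K x y))"

definition psdK :: "nat \<Rightarrow> (nat \<Rightarrow> nat \<Rightarrow> complex) \<Rightarrow> bool" where
  "psdK D K \<longleftrightarrow> (\<forall>f. 0 \<le> Qk D K f)"

lemma psdK_mono:
  assumes "psdK (Suc D) K" shows "psdK D K"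
  unfolding psdK_def
proof
  fix f :: "nat \<Rightarrow> complex"
  define g where "g x = (if x < D then f x else 0)" for x
  have "Qk (Suc D) K g = (\<Sum>x<D. \<Sum>y<D. cnj (g x) * K x y * g y)"
    unfolding Qk_def by (simp add: sum.lessThan_Suc g_def)
  also have "\<dots> = Qk D K f" unfolding Qk_def g_def by (intro sum.cong refl) simp
  finally show "0 \<le> Qk D K f" using assms unfolding psdK_def by metis
qed

lemma psd_diag:
  assumes "psdK D K" "z < D"
  shows "Im (K z z) = 0" "Re (K z z) \<ge> 0"
proof -
  have "0 \<le> Qk D K (\<lambda>x. if x = z then 1 else 0)" using assms(1) unfolding psdK_def by blast
  hence "0 \<le> K z z" unfolding Qk_delta[OF assms(2)] by simp
  thus "Im (K z z) = 0" "Re (K z z) \<ge> 0" by (auto simp: less_eq_complex_def)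
qed

lemma psd_offdiag_zero:
  assumes P: "psdK D K" and H: "hermK D K" and xD: "x < D" and zD: "z < D" and xz: "x \<noteq> z"
    and z0: "Re (K z z) = 0"
  shows "K x z = 0"
proof -
  have "(cmod (K x z))^2 \<le> Re (K x x) * Re (K z z)"
  proof (rule cs_real)
    fix a b :: complex
    have "0 \<le> Qk D K (\<lambda>w. (if w = x then a else 0) + (if w = z then b else 0))"
      using P unfolding psdK_def by blast
    hence "0 \<le> Re (cnj a * a * K x x + cnj b * a * K z x + b * cnj a * K x z + cnj b * b * K z z)"
      unfolding Qk_two[OF xD zD xz] by (simp add: less_eq_complex_def)
    also have "K z x = cnj (K x z)" using H xD zD unfolding hermK_def by blast
    also have "cnj a * a = of_real ((cmod a)^2)" using complex_norm_square[of a] by (simp add: mult.commute)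
    also have "cnj b * b = of_real ((cmod b)^2)" using complex_norm_square[of b] by (simp add: mult.commute)
    also have "Re (of_real ((cmod a)^2) * K x x + cnj b * a * cnj (K x z) + b * cnj a * K x z + of_real ((cmod b)^2) * K z z)
       = (cmod a)^2 * Re (K x x) + 2 * Re (cnj a * b * K x z) + (cmod b)^2 * Re (K z z)"
    proof -
      have e1: "cnj b * a * cnj (K x z) = cnj (cnj a * b * K x z)" by simp
      have e2: "b * cnj a * K x z = cnj a * b * K x z" by simp
      have r: "Re (of_real r1 * p + cnj w + w + of_real r2 * q) = r1 * Re p + 2 * Re w + r2 * Re q"
        for r1 r2 :: real and p w q :: complex by simp
      show ?thesis unfolding e1 e2 by (rule r)
    qed
    finally show "0 \<le> (cmod a)^2 * Re (K x x) + 2 * Re (cnj a * b * K x z) + (cmod b)^2 * Re (K z z)" .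
  next
    show "0 \<le> Re (K x x)" using psd_diag[OF P xD] by simp
    show "0 \<le> Re (K z z)" using z0 by simp
  qed
  hence "(cmod (K x z))^2 \<le> 0" using z0 by simp
  thus ?thesis by simp
qed


lemma gram:
  "hermK D K \<Longrightarrow> psdK D K \<Longrightarrow> \<exists>\<phi>. \<forall>x<D. \<forall>y<D. K x y = (\<Sum>r<D. \<phi> r x * cnj (\<phi> r y))"
proof (induction D arbitrary: K)
  case 0
  then show ?case by simp
next
  case (Suc D)
  note H = Suc.prems(1) and P = Suc.prems(2)
  have DD: "D < Suc D" by simp
  define \<delta> where "\<delta> = Re (K D D)"
  have dIm: "Im (K D D) = 0" and dpos: "\<delta> \<ge> 0" using psd_diag[OF P DD] unfolding \<delta>_def by auto
  have KDD: "K D D = of_real \<delta>" using dIm unfolding \<delta>_def by (simp add: complex_eq_iff)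
  define s where "s = sqrt \<delta>"
  define c where "c x = (if \<delta> = 0 then 0 else K x D / of_real s)" for x
  define K' where "K' x y = K x y - c x * cnj (c y)" for x y
  have Hx: "K y x = cnj (K x y)" if "x < Suc D" "y < Suc D" for x y
    using H that unfolding hermK_def by blast
  have kd: "K' x D = 0 \<and> K' D x = 0" if x: "x < Suc D" for x
  proof (cases "\<delta> = 0")
    case True
    have "K x D = 0"
    proof (cases "x = D")
      case True
      thus ?thesis using KDD \<open>\<delta> = 0\<close> by simp
    next
      case False
      show ?thesis by (rule psd_offdiag_zero[OF P H x DD False]) (use True \<delta>_def in simp)
    qed
    moreover have "K D x = 0" using Hx[OF x DD] \<open>K x D = 0\<close> by simp
    ultimately show ?thesis unfolding K'_def c_def using True by simp
  next
    case False
    hence spos: "s > 0" unfolding s_def using dpos by simp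
    have dss: "\<delta> = s * s" unfolding s_def using dpos by simp
    have cD: "c D = of_real s" unfolding c_def using False spos KDD dss by simp
    have "K' x D = K x D - K x D / of_real s * of_real s" unfolding K'_def cD unfolding c_def using False by simp
    also have "\<dots> = 0" using spos by simp
    finally have a: "K' x D = 0" .
    have "K' D x = K D x - of_real s * cnj (K x D / of_real s)" unfolding K'_def cD unfolding c_def using False by simp
    also have "\<dots> = 0" using spos Hx[OF x DD] by simp
    finally show ?thesis using a by simp
  qed
  have H': "hermK (Suc D) K'"
    unfolding hermK_def K'_def by (auto simp: Hx[symmetric])
  have P': "psdK (Suc D) K'"
    unfolding psdK_def
  proof
    fix f :: "nat \<Rightarrow> complex"
    show "0 \<le> Qk (Suc D) K' f"
    proof (cases "\<delta> = 0")
      case True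
      hence "K' = K" unfolding K'_def c_def by (simp add: fun_eq_iff)
      thus ?thesis using P unfolding psdK_def by simp
    next
      case False
      hence spos: "s > 0" unfolding s_def using dpos by simp
      have ss: "of_real s * of_real s = (of_real \<delta> :: complex)"
        unfolding s_def using dpos by (simp flip: of_real_mult)
      define S where "S = (\<Sum>y<Suc D. cnj (c y) * f y)"
      have e1: "Qk (Suc D) K' f = Qk (Suc D) K f - cnj S * S"
      proof -
        have "Qk (Suc D) K' f = (\<Sum>x<Suc D. \<Sum>y<Suc D. cnj (f x) * K x y * f y - (cnj (f x) * c x) * (cnj (c y) * f y))"
          unfolding Qk_def K'_def by (simp add: algebra_simps)
        also have "\<dots> = Qk (Suc D) K f - (\<Sum>x<Suc D. \<Sum>y<Suc D. (cnj (f x) * c x) * (cnj (c y) * f y))"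
          unfolding Qk_def by (simp only: sum_subtractf)
        also have "(\<Sum>x<Suc D. \<Sum>y<Suc D. (cnj (f x) * c x) * (cnj (c y) * f y)) = (\<Sum>x<Suc D. cnj (f x) * c x) * S"
          unfolding S_def by (rule sum_product[symmetric])
        also have "(\<Sum>x<Suc D. cnj (f x) * c x) = cnj S" unfolding S_def by (simp add: mult.commute)
        finally show ?thesis .
      qed
      define t where "t = - S / of_real s"
      have e2: "(\<Sum>y<Suc D. K D y * f y) = of_real s * S"
      proof -
        have "K D y = of_real s * cnj (c y)" if "y < Suc D" for y
          unfolding c_def using False spos Hx[OF that DD] by simp
        hence "(\<Sum>y<Suc D. K D y * f y) = (\<Sum>y<Suc D. of_real s * (cnj (c y) * f y))"
          by (intro sum.cong refl) simp
        thus ?thesis unfolding S_def sum_distrib_left .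
      qed
      have e3: "(\<Sum>x<Suc D. cnj (f x) * K x D) = of_real s * cnj S"
      proof -
        have "K x D = of_real s * c x" if "x < Suc D" for x
          unfolding c_def using False spos by simp
        hence "(\<Sum>x<Suc D. cnj (f x) * K x D) = (\<Sum>x<Suc D. of_real s * cnj (cnj (c x) * f x))"
          by (intro sum.cong refl) (simp add: mult.commute)
        thus ?thesis unfolding S_def cnj_sum sum_distrib_left .
      qed
      have "Qk (Suc D) K (\<lambda>x. f x + (if x = D then t else 0)) =
         Qk (Suc D) K f + cnj t * (of_real s * S) + t * (of_real s * cnj S) + cnj t * t * K D D"
        using Qk_shift[OF DD, of K f t] unfolding e2 e3 .
      also have "\<dots> = Qk (Suc D) K f + (of_real s * cnj t) * S + (of_real s * t) * cnj S + (of_real s * cnj t) * (of_real s * t)"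
        unfolding KDD ss[symmetric] by (simp only: mult_ac)
      also have "of_real s * t = - S" unfolding t_def using spos by simp
      also have "of_real s * cnj t = - cnj S" unfolding t_def using spos by simp
      also have "Qk (Suc D) K f + - cnj S * S + - S * cnj S + - cnj S * - S = Qk (Suc D) K f - cnj S * S"
        by (simp add: algebra_simps)
      also have "\<dots> = Qk (Suc D) K' f" using e1 by simp
      finally show ?thesis using P unfolding psdK_def by metis
    qed
  qed
  have "hermK D K'" unfolding hermK_def
  proof (intro allI impI)
    fix x y assume "x < D" "y < D"
    thus "K' y x = cnj (K' x y)" using H' unfolding hermK_def by (meson less_SucI)
  qed
  moreover have "psdK D K'" by (rule psdK_mono[OF P'])
  ultimately obtain \<phi>' where \<phi>': "\<And>x y. x < D \<Longrightarrow> y < D \<Longrightarrow> K' x y = (\<Sum>r<D. \<phi>' r x * cnj (\<phi>' r y))"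
    using Suc.IH by blast
  define \<phi> where "\<phi> r x = (if r < D then (if x < D then \<phi>' r x else 0) else c x)" for r x
  have "K x y = (\<Sum>r<Suc D. \<phi> r x * cnj (\<phi> r y))" if x: "x < Suc D" and y: "y < Suc D" for x y
  proof -
    have sD: "(\<Sum>r<D. \<phi> r x * cnj (\<phi> r y)) = K' x y"
    proof (cases "x < D \<and> y < D")
      case True
      thus ?thesis using \<phi>'[of x y] unfolding \<phi>_def by simp
    next
      case False
      hence "x = D \<or> y = D" using x y by auto
      hence "K' x y = 0" using kd x y by auto
      moreover have "(\<Sum>r<D. \<phi> r x * cnj (\<phi> r y)) = 0" using False unfolding \<phi>_def by auto
      ultimately show ?thesis by simp
    qed
    have "(\<Sum>r<Suc D. \<phi> r x * cnj (\<phi> r y)) = K' x y + c x * cnj (c y)"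
      unfolding sum.lessThan_Suc sD unfolding \<phi>_def by simp
    thus ?thesis unfolding K'_def by simp
  qed
  thus ?case by blast
qed


lemma sum_split_nat: "(\<Sum>i<a*b. F i) = (\<Sum>x<(a::nat). \<Sum>y<b. F (x*b+y))"
proof -
  have "(\<Sum>i<a*b. F i) = (\<Sum>x<a. sum F {x*b..<x*b+b})" by (rule sum.nat_group[symmetric])
  also have "\<dots> = (\<Sum>x<a. \<Sum>y<b. F (x*b+y))"
  proof (rule sum.cong[OF refl])
    fix x
    have "sum F {x*b..<x*b+b} = sum F {0+x*b..<b+x*b}" by (simp add: add.commute)
    also have "\<dots> = (\<Sum>y\<in>{0..<b}. F (y + x*b))" by (rule sum.shift_bounds_nat_ivl)
    also have "\<dots> = (\<Sum>y<b. F (x*b+y))" by (simp add: atLeast0LessThan add.commute)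
    finally show "sum F {x*b..<x*b+b} = (\<Sum>y<b. F (x*b+y))" .
  qed
  finally show ?thesis .
qed

lemma Qf_sum_G:
  fixes R :: "'r set"
  shows "Qf N (\<lambda>I J I' J'. \<Sum>\<rho>\<in>R. H \<rho> I J I' J') f g = (\<Sum>\<rho>\<in>R. Qf N (H \<rho>) f g)"
  unfolding Qf_def by (simp only: sum_distrib_left sum_distrib_right sum.swap[where B=R])

lemma Qf_rank1:
  "Qf N (\<lambda>I J I' J'. \<Psi> I J * cnj (\<Psi> I' J')) f f = cnj Z * Z"
  if "Z = (\<Sum>I<N. \<Sum>J<N. cnj (\<Psi> I J) * f I J)"
proof -
  have "cnj Z * Z = (\<Sum>I<N. \<Sum>J<N. cnj (f I J) * \<Psi> I J) * (\<Sum>I'<N. \<Sum>J'<N. cnj (\<Psi> I' J') * f I' J')"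
    unfolding that by (simp add: cnj_sum mult.commute)
  also have "\<dots> = (\<Sum>I<N. \<Sum>I'<N. (\<Sum>J<N. cnj (f I J) * \<Psi> I J) * (\<Sum>J'<N. cnj (\<Psi> I' J') * f I' J'))"
    by (rule sum_product)
  also have "\<dots> = (\<Sum>I<N. \<Sum>I'<N. \<Sum>J<N. \<Sum>J'<N. (cnj (f I J) * \<Psi> I J) * (cnj (\<Psi> I' J') * f I' J'))"
    by (simp only: sum_product)
  also have "\<dots> = (\<Sum>I<N. \<Sum>J<N. \<Sum>I'<N. \<Sum>J'<N. (cnj (f I J) * \<Psi> I J) * (cnj (\<Psi> I' J') * f I' J'))"
    by (rule sum.cong[OF refl], rule sum.swap)
  also have "\<dots> = Qf N (\<lambda>I J I' J'. \<Psi> I J * cnj (\<Psi> I' J')) f f"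
    unfolding Qf_def by (simp only: mult.assoc)
  finally show ?thesis ..
qed

lemma Qf_cong_G:
  assumes "\<And>I J I' J'. I<N \<Longrightarrow> J<N \<Longrightarrow> I'<N \<Longrightarrow> J'<N \<Longrightarrow> G I J I' J' = G' I J I' J'"
  shows "Qf N G f g = Qf N G' f g"
  unfolding Qf_def using assms by (intro sum.cong refl) auto

lemma prod_psd:
  fixes \<Phi> :: "nat \<Rightarrow> nat \<Rightarrow> nat \<Rightarrow> complex" and X :: "nat \<Rightarrow> nat \<Rightarrow> nat \<Rightarrow> nat"
  assumes G: "\<And>I J I' J'. I<N \<Longrightarrow> J<N \<Longrightarrow> I'<N \<Longrightarrow> J'<N \<Longrightarrow>
     G I J I' J' = (\<Prod>m<n. \<Sum>r<D. \<Phi> m r (X m I J) * cnj (\<Phi> m r (X m I' J')))"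
  shows "0 \<le> Qf N G f f"
proof -
  define P where "P = PiE {..<n} (\<lambda>_. {..<D})"
  define \<Psi> where "\<Psi> \<rho> I J = (\<Prod>m<n. \<Phi> m (\<rho> m) (X m I J))" for \<rho> I J
  have G': "G I J I' J' = (\<Sum>\<rho>\<in>P. \<Psi> \<rho> I J * cnj (\<Psi> \<rho> I' J'))"
    if "I<N" "J<N" "I'<N" "J'<N" for I J I' J'
  proof -
    have "G I J I' J' = (\<Sum>\<rho>\<in>P. \<Prod>m<n. \<Phi> m (\<rho> m) (X m I J) * cnj (\<Phi> m (\<rho> m) (X m I' J')))"
      unfolding G[OF that] P_def by (rule prod_sum_PiE) auto
    also have "\<dots> = (\<Sum>\<rho>\<in>P. \<Psi> \<rho> I J * cnj (\<Psi> \<rho> I' J'))"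
      unfolding \<Psi>_def by (simp add: prod.distrib cnj_prod)
    finally show ?thesis .
  qed
  have "Qf N G f f = Qf N (\<lambda>I J I' J'. \<Sum>\<rho>\<in>P. \<Psi> \<rho> I J * cnj (\<Psi> \<rho> I' J')) f f"
    by (rule Qf_cong_G) (rule G')
  also have "\<dots> = (\<Sum>\<rho>\<in>P. Qf N (\<lambda>I J I' J'. \<Psi> \<rho> I J * cnj (\<Psi> \<rho> I' J')) f f)"
    by (rule Qf_sum_G)
  also have "\<dots> = (\<Sum>\<rho>\<in>P. cnj (\<Sum>I<N. \<Sum>J<N. cnj (\<Psi> \<rho> I J) * f I J) * (\<Sum>I<N. \<Sum>J<N. cnj (\<Psi> \<rho> I J) * f I J))"
    by (rule sum.cong[OF refl], rule Qf_rank1, rule refl)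
  also have "0 \<le> \<dots>"
  proof (rule sum_nonneg)
    fix \<rho> show "0 \<le> cnj (\<Sum>I<N. \<Sum>J<N. cnj (\<Psi> \<rho> I J) * f I J) * (\<Sum>I<N. \<Sum>J<N. cnj (\<Psi> \<rho> I J) * f I J)"
      using conjugate_square_positive[of "\<Sum>I<N. \<Sum>J<N. cnj (\<Psi> \<rho> I J) * f I J"] by (simp add: mult.commute)
  qed
  finally show ?thesis .
qed

lemma state_herm:
  assumes "is_state D A"
  shows "hermK D (\<lambda>x y. A $$ (x,y))"
proof -
  have A: "A \<in> carrier_mat D D" and adj: "mat_adjoint A = A" using assms unfolding is_state_def by auto
  show ?thesis unfolding hermK_def
  proof (intro allI impI)
    fix x y assume xy: "x < D" "y < D"
    have "A $$ (y,x) = mat_adjoint A $$ (y,x)" using adj by simp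
    also have "\<dots> = cnj (A $$ (x,y))" unfolding mat_adjoint_def using A xy
      by (simp add: mat_of_rows_index)
    finally show "A $$ (y,x) = cnj (A $$ (x,y))" .
  qed
qed

lemma state_psd:
  assumes "is_state D A"
  shows "psdK D (\<lambda>x y. A $$ (x,y))"
proof -
  have A: "A \<in> carrier_mat D D" and P: "\<forall>x\<in>carrier_vec D. 0 \<le> (A *\<^sub>v x) \<bullet>c x"
    using assms unfolding is_state_def by auto
  show ?thesis unfolding psdK_def
  proof
    fix f :: "nat \<Rightarrow> complex"
    have "0 \<le> (A *\<^sub>v vec D f) \<bullet>c vec D f" using P by simp
    also have "(A *\<^sub>v vec D f) \<bullet>c vec D f = (\<Sum>x<D. (\<Sum>y<D. A $$ (x,y) * f y) * cnj (f x))"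
      using A by (simp add: scalar_prod_def atLeast0LessThan row_def)
    also have "\<dots> = Qk D (\<lambda>x y. A $$ (x,y)) f"
      unfolding Qk_def by (simp add: sum_distrib_left sum_distrib_right mult_ac)
    finally show "0 \<le> Qk D (\<lambda>x y. A $$ (x,y)) f" .
  qed
qed


lemma idx_lt: "p < k \<Longrightarrow> q < (k::nat) \<Longrightarrow> p * k + q < k * k"
proof -
  assume "p < k" "q < k"
  hence "p * k + q < p * k + k" by simp
  also have "\<dots> = (p + 1) * k" by simp
  also have "\<dots> \<le> k * k" using \<open>p < k\<close> by (intro mult_right_mono) auto
  finally show ?thesis .
qed

lemma idx_div: "q < (k::nat) \<Longrightarrow> (p * k + q) div k = p"
  by simp

lemma idx_mod: "q < (k::nat) \<Longrightarrow> (p * k + q) mod k = q"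
  by simp

lemma ptrans_idx:
  assumes "p < k" "q < k" "p' < k" "q' < k"
  shows "ptrans k G $$ (p*k+q, p'*k+q') = G $$ (p*k+q', p'*k+q)"
  unfolding ptrans_def using assms idx_lt[OF assms(1,2)] idx_lt[OF assms(3,4)] by simp

lemma realign_idx:
  assumes "p < k" "q < k" "p' < k" "q' < k"
  shows "realign k G $$ (p*k+q, p'*k+q') = G $$ (p*k+p', q*k+q')"
  unfolding realign_def using assms idx_lt[OF assms(1,2)] idx_lt[OF assms(3,4)] by simp

lemma digit_lt: "0 < k \<Longrightarrow> digit k n m I < k"
  unfolding digit_def by simp

lemma trace_formula:
  fixes a b c d :: "complex vec" and \<gamma> :: "nat \<Rightarrow> complex mat"
  assumes k: "0 < k" and N: "N = k^n"
    and abcd: "a \<in> carrier_vec N" "b \<in> carrier_vec N" "c \<in> carrier_vec N" "d \<in> carrier_vec N"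
  defines "Gs \<equiv> \<lambda>I J I' J'. \<Prod>m<n. \<gamma> m $$ (digit k n m I * k + digit k n m J, digit k n m I' * k + digit k n m J')"
  shows "trace (shuffle k n (\<lambda>i. ptrans k (\<gamma> i)) * outer (kron_vec N a b + kron_vec N c d)) =
     Tw N Gs (\<lambda>I J. a $ I * b $ J + c $ I * d $ J) (\<lambda>I J. a $ I * b $ J + c $ I * d $ J)"
proof -
  define w where "w = kron_vec N a b + kron_vec N c d"
  define v where "v = (\<lambda>I J. a $ I * b $ J + c $ I * d $ J)"
  define Sh where "Sh = shuffle k n (\<lambda>i. ptrans k (\<gamma> i))"
  have Npos: "N > 0" using k N by simp
  have dw: "dim_vec w = N * N" unfolding w_def kron_vec_def by simp
  have wi: "w $ (I*N+J) = v I J" if "I < N" "J < N" for I J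
  proof -
    have lt: "I*N+J < N*N" using idx_lt[OF that] .
    show ?thesis unfolding w_def v_def kron_vec_def using lt that by simp
  qed
  have ShC: "dim_row Sh = N*N" "dim_col Sh = N*N" unfolding Sh_def shuffle_def N Let_def by simp_all
  have OC: "dim_row (outer w) = N*N" "dim_col (outer w) = N*N" unfolding outer_def dw by simp_all
  have Shi: "Sh $$ (I*N+J, I'*N+J') = Gs I J' I' J" if "I<N" "J<N" "I'<N" "J'<N" for I J I' J'
  proof -
    have lt1: "I*N+J < N*N" using idx_lt[OF that(1,2)] .
    have lt2: "I'*N+J' < N*N" using idx_lt[OF that(3,4)] .
    have "Sh $$ (I*N+J, I'*N+J') = (\<Prod>m<n. ptrans k (\<gamma> m) $$ (digit k n m I * k + digit k n m J, digit k n m I' * k + digit k n m J'))"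
      unfolding Sh_def shuffle_def Let_def N[symmetric] using lt1 lt2 that by simp
    also have "\<dots> = Gs I J' I' J" unfolding Gs_def
      by (intro prod.cong refl ptrans_idx digit_lt k)
    finally show ?thesis .
  qed
  have Oi: "outer w $$ (i, j) = w $ i * cnj (w $ j)" if "i < N*N" "j < N*N" for i j
    unfolding outer_def using that dw by simp
  have "trace (Sh * outer w) = (\<Sum>i<N*N. \<Sum>j<N*N. Sh $$ (i,j) * outer w $$ (j,i))"
    unfolding trace_def using ShC OC by (simp add: scalar_prod_def atLeast0LessThan)
  also have "\<dots> = (\<Sum>I<N. \<Sum>J<N. \<Sum>I'<N. \<Sum>J'<N. Sh $$ (I*N+J, I'*N+J') * outer w $$ (I'*N+J', I*N+J))"
    by (simp only: sum_split_nat)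
  also have "\<dots> = (\<Sum>I<N. \<Sum>J<N. \<Sum>I'<N. \<Sum>J'<N. cnj (v I J) * Gs I J' I' J * v I' J')"
    by (intro sum.cong refl) (simp add: Shi Oi idx_lt wi mult_ac)
  also have "\<dots> = Tw N Gs v v" unfolding Tw_def ..
  finally show ?thesis unfolding Sh_def w_def v_def .
qed


lemma rank2_span:
  fixes a b c d :: "complex vec"
  assumes abcd: "a \<in> carrier_vec N" "b \<in> carrier_vec N" "c \<in> carrier_vec N" "d \<in> carrier_vec N"
    and r: "vec_space.rank N (mat_of_cols N [a, b, c, d]) = 2"
  shows "\<exists>u1 u2. \<forall>x\<in>{a,b,c,d}. \<exists>\<alpha> \<beta>. \<forall>i<N. x $ i = \<alpha> * u1 $ i + \<beta> * u2 $ i"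
proof -
  interpret V: vec_space "TYPE(complex)" N .
  let ?A = "mat_of_cols N [a, b, c, d]"
  have A: "?A \<in> carrier_mat N (length [a,b,c,d])" by (rule mat_of_cols_carrier(1))
  have cols: "set (cols ?A) = {a,b,c,d}" using abcd by (simp add: cols_mat_of_cols)
  have sub: "{a,b,c,d} \<subseteq> carrier_vec N" using abcd by auto
  have li0: "V.lin_indpt {}" unfolding V.lin_dep_def by auto
  obtain S where S: "maximal S (\<lambda>T. T \<subseteq> set (cols ?A) \<and> V.lin_indpt T)"
    using maximal_exists_superset[of "set (cols ?A)" "\<lambda>T. T \<subseteq> set (cols ?A) \<and> V.lin_indpt T" "{}"]
    using li0 by auto
  have cardS: "card S = 2" using V.rank_card_indpt[OF A S] r by simp
  have SA: "S \<subseteq> {a,b,c,d}" and indS: "V.lin_indpt S" using S cols unfolding maximal_def by auto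
  have SC: "S \<subseteq> carrier_vec N" using SA sub by auto
  obtain u1 u2 where S12: "S = {u1, u2}" using cardS by (auto simp: card_Suc_eq numeral_2_eq_2)
  have inspan: "x \<in> V.span S" if x: "x \<in> {a,b,c,d}" for x
  proof (rule ccontr)
    assume nx: "x \<notin> V.span S"
    have xS: "x \<notin> S" using nx V.in_own_span[OF SC] by auto
    have xC: "x \<in> carrier_vec N" using x sub by auto
    have "V.lin_indpt (S \<union> {x})" using V.lin_dep_iff_in_span[OF SC indS xC xS] nx by simp
    moreover have "S \<union> {x} \<subseteq> set (cols ?A)" using SA x cols by auto
    ultimately have "S \<union> {x} = S" using S unfolding maximal_def by blast
    with xS show False by auto
  qed
  have "\<exists>\<alpha> \<beta>. \<forall>i<N. x $ i = \<alpha> * u1 $ i + \<beta> * u2 $ i" if x: "x \<in> {a,b,c,d}" for x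
  proof -
    obtain f A' where xA: "x = V.lincomb f A'" and fin: "finite A'" and A'S: "A' \<subseteq> S"
      using V.in_spanE[OF inspan[OF x]] by blast
    have A'C: "A' \<subseteq> carrier_vec N" using A'S SC by auto
    have xi: "x $ i = (\<Sum>v\<in>A'. f v * v $ i)" if "i < N" for i
      unfolding xA by (rule V.lincomb_index[OF that A'C])
    have "A' = {} \<or> A' = {u1} \<or> A' = {u2} \<or> A' = {u1,u2}" using A'S S12 by blast
    moreover have "u1 \<noteq> u2" using cardS S12 by auto
    ultimately show ?thesis
    proof (elim disjE)
      assume "A' = {}" thus ?thesis using xi by (intro exI[of _ 0]) auto
    next
      assume "A' = {u1}" thus ?thesis using xi by (intro exI[of _ "f u1"] exI[of _ 0]) auto
    next
      assume "A' = {u2}" thus ?thesis using xi by (intro exI[of _ 0] exI[of _ "f u2"]) auto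
    next
      assume "A' = {u1,u2}" "u1 \<noteq> u2" thus ?thesis using xi by (intro exI[of _ "f u1"] exI[of _ "f u2"]) auto
    qed
  qed
  thus ?thesis by blast
qed

lemma sym2:
  fixes A B C :: complex
  shows "\<exists>x11 x12 x21 x22. x11*x11 + x21*x21 = A \<and> x11*x12 + x21*x22 = B \<and> x12*x12 + x22*x22 = C"
proof (cases "A = 0")
  case False
  define s where "s = csqrt A"
  have s2: "s * s = A" unfolding s_def using power2_csqrt[of A] by (simp add: power2_eq_square)
  hence s0: "s \<noteq> 0" using False by auto
  define t where "t = csqrt (C - B*B/A)"
  have t2: "t * t = C - B*B/A" unfolding t_def using power2_csqrt by (simp add: power2_eq_square)
  show ?thesis
  proof (intro exI conjI)
    show "s * s + 0 * 0 = A" using s2 by simp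
    show "s * (B/s) + 0 * t = B" using s0 by simp
    show "B/s * (B/s) + t * t = C" using t2 s2 s0 by (simp add: field_simps)
  qed
next
  case A0: True
  show ?thesis
  proof (cases "B = 0")
    case True
    define t where "t = csqrt C"
    have t2: "t * t = C" unfolding t_def using power2_csqrt by (simp add: power2_eq_square)
    show ?thesis using A0 True t2 by (intro exI[of _ 0] exI[of _ t] exI[of _ 0] exI[of _ 0]) simp
  next
    case False
    define p where "p = (B + C/B)/2"
    define q where "q = - \<i> * (B - C/B)/2"
    show ?thesis
    proof (intro exI conjI)
      show "1 * 1 + \<i> * \<i> = A" using A0 by simp
      show "1 * p + \<i> * q = B" unfolding p_def q_def by (simp add: field_simps)
      show "p * p + q * q = C" unfolding p_def q_def using False by (simp add: field_simps power2_eq_square)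
    qed
  qed
qed


theorem mainTheorem19:
  fixes k n :: nat and \<gamma> :: "nat \<Rightarrow> complex mat"
  assumes "n \<ge> 1"
    and "\<forall>i<n. is_state (k*k) (\<gamma> i) \<and> realign k (\<gamma> i) = \<gamma> i"
  shows "\<not> (\<exists>a b c d. a \<in> carrier_vec (k^n) \<and> b \<in> carrier_vec (k^n) \<and>
                  c \<in> carrier_vec (k^n) \<and> d \<in> carrier_vec (k^n) \<and>
                  vec_space.rank (k^n) (mat_of_cols (k^n) [a, b, c, d]) = 2 \<and>
                  trace (shuffle k n (\<lambda>i. ptrans k (\<gamma> i)) *
                    outer (kron_vec (k^n) a b + kron_vec (k^n) c d)) < 0)"
proof
  assume "\<exists>a b c d. a \<in> carrier_vec (k^n) \<and> b \<in> carrier_vec (k^n) \<and>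
                  c \<in> carrier_vec (k^n) \<and> d \<in> carrier_vec (k^n) \<and>
                  vec_space.rank (k^n) (mat_of_cols (k^n) [a, b, c, d]) = 2 \<and>
                  trace (shuffle k n (\<lambda>i. ptrans k (\<gamma> i)) *
                    outer (kron_vec (k^n) a b + kron_vec (k^n) c d)) < 0"
  then obtain a b c d where abcd: "a \<in> carrier_vec (k^n)" "b \<in> carrier_vec (k^n)"
     "c \<in> carrier_vec (k^n)" "d \<in> carrier_vec (k^n)"
     and rk: "vec_space.rank (k^n) (mat_of_cols (k^n) [a, b, c, d]) = 2"
     and neg: "trace (shuffle k n (\<lambda>i. ptrans k (\<gamma> i)) *
                    outer (kron_vec (k^n) a b + kron_vec (k^n) c d)) < 0"
    by blast
  define N where "N = k^n"
  show False
  proof (cases "k = 0")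
    case True
    hence N0: "N = 0" unfolding N_def using assms(1) by simp
    have "dim_row (shuffle k n (\<lambda>i. ptrans k (\<gamma> i))) = 0"
      unfolding shuffle_def Let_def N_def[symmetric] N0 by simp
    hence "trace (shuffle k n (\<lambda>i. ptrans k (\<gamma> i)) *
                    outer (kron_vec (k^n) a b + kron_vec (k^n) c d)) = 0"
      unfolding trace_def by simp
    with neg show False by simp
  next
    case False
    hence k: "0 < k" by simp
    define Gs where "Gs = (\<lambda>I J I' J'. \<Prod>m<n. \<gamma> m $$ (digit k n m I * k + digit k n m J, digit k n m I' * k + digit k n m J'))"
    define v where "v = (\<lambda>I J. a $ I * b $ J + c $ I * d $ J)"
    have tr: "trace (shuffle k n (\<lambda>i. ptrans k (\<gamma> i)) * outer (kron_vec N a b + kron_vec N c d)) = Tw N Gs v v"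
      unfolding Gs_def v_def by (rule trace_formula[OF k N_def abcd[folded N_def]])
    have dl: "digit k n m I < k" for m I using digit_lt[OF k] .
    have GR: "Gs I J I' J' = Gs I I' J J'" for I J I' J'
      unfolding Gs_def
    proof (rule prod.cong[OF refl])
      fix m assume "m \<in> {..<n}"
      hence "realign k (\<gamma> m) = \<gamma> m" using assms(2) by auto
      hence "\<gamma> m $$ (digit k n m I * k + digit k n m J, digit k n m I' * k + digit k n m J')
          = realign k (\<gamma> m) $$ (digit k n m I * k + digit k n m J, digit k n m I' * k + digit k n m J')" by simp
      also have "\<dots> = \<gamma> m $$ (digit k n m I * k + digit k n m I', digit k n m J * k + digit k n m J')"
        by (rule realign_idx[OF dl dl dl dl])
      finally show "\<gamma> m $$ (digit k n m I * k + digit k n m J, digit k n m I' * k + digit k n m J')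
          = \<gamma> m $$ (digit k n m I * k + digit k n m I', digit k n m J * k + digit k n m J')" .
    qed
    have GH: "Gs I' J' I J = cnj (Gs I J I' J')" for I J I' J'
      unfolding Gs_def cnj_prod
    proof (rule prod.cong[OF refl])
      fix m assume "m \<in> {..<n}"
      hence "hermK (k*k) (\<lambda>x y. \<gamma> m $$ (x,y))" using assms(2) state_herm by auto
      thus "\<gamma> m $$ (digit k n m I' * k + digit k n m J', digit k n m I * k + digit k n m J)
          = cnj (\<gamma> m $$ (digit k n m I * k + digit k n m J, digit k n m I' * k + digit k n m J'))"
        unfolding hermK_def using idx_lt[OF dl dl] by blast
    qed
    have "\<forall>m\<in>{..<n}. \<exists>\<phi>. \<forall>x<k*k. \<forall>y<k*k. \<gamma> m $$ (x,y) = (\<Sum>r<k*k. \<phi> r x * cnj (\<phi> r y))"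
    proof
      fix m assume "m \<in> {..<n}"
      hence "is_state (k*k) (\<gamma> m)" using assms(2) by auto
      thus "\<exists>\<phi>. \<forall>x<k*k. \<forall>y<k*k. \<gamma> m $$ (x,y) = (\<Sum>r<k*k. \<phi> r x * cnj (\<phi> r y))"
        using gram[OF state_herm state_psd] by blast
    qed
    then obtain \<Phi> where \<Phi>: "\<And>m x y. m \<in> {..<n} \<Longrightarrow> x < k*k \<Longrightarrow> y < k*k \<Longrightarrow>
        \<gamma> m $$ (x,y) = (\<Sum>r<k*k. \<Phi> m r x * cnj (\<Phi> m r y))"
      by (metis bchoice)
    have GP: "0 \<le> Qf N Gs f f" for f
    proof (rule prod_psd[where \<Phi>=\<Phi> and X="\<lambda>m I J. digit k n m I * k + digit k n m J" and D="k*k" and n=n])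
      fix I J I' J'
      show "Gs I J I' J' = (\<Prod>m<n. \<Sum>r<k*k. \<Phi> m r (digit k n m I * k + digit k n m J) * cnj (\<Phi> m r (digit k n m I' * k + digit k n m J')))"
        unfolding Gs_def by (rule prod.cong[OF refl], rule \<Phi>) (auto intro: idx_lt dl)
    qed
    obtain u1 u2 where uu: "\<forall>x\<in>{a,b,c,d}. \<exists>\<alpha> \<beta>. \<forall>i<N. x $ i = \<alpha> * u1 $ i + \<beta> * u2 $ i"
      using rank2_span[OF abcd rk] unfolding N_def by blast
    obtain \<alpha>1 \<alpha>2 where ha: "\<And>i. i<N \<Longrightarrow> a $ i = \<alpha>1 * u1 $ i + \<alpha>2 * u2 $ i" using uu by blast
    obtain \<beta>1 \<beta>2 where hb: "\<And>i. i<N \<Longrightarrow> b $ i = \<beta>1 * u1 $ i + \<beta>2 * u2 $ i" using uu by blast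
    obtain \<gamma>1 \<gamma>2 where hc: "\<And>i. i<N \<Longrightarrow> c $ i = \<gamma>1 * u1 $ i + \<gamma>2 * u2 $ i" using uu by blast
    obtain \<delta>1 \<delta>2 where hd: "\<And>i. i<N \<Longrightarrow> d $ i = \<delta>1 * u1 $ i + \<delta>2 * u2 $ i" using uu by blast
    define S11 where "S11 = \<alpha>1 * \<beta>1 + \<gamma>1 * \<delta>1"
    define S22 where "S22 = \<alpha>2 * \<beta>2 + \<gamma>2 * \<delta>2"
    define T12 where "T12 = \<alpha>1 * \<beta>2 + \<alpha>2 * \<beta>1 + \<gamma>1 * \<delta>2 + \<gamma>2 * \<delta>1"
    obtain x11 x12 x21 x22 where xs: "x11*x11 + x21*x21 = S11" "x11*x12 + x21*x22 = T12/2" "x12*x12 + x22*x22 = S22"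
      using sym2[of S11 "T12/2" S22] by blast
    define y1 where "y1 = (\<lambda>I. x11 * u1 $ I + x12 * u2 $ I)"
    define y2 where "y2 = (\<lambda>I. x21 * u1 $ I + x22 * u2 $ I)"
    have sym: "v I J + v J I = 2 * (y1 I * y1 J + y2 I * y2 J)" if IJ: "I < N" "J < N" for I J
    proof -
      let ?p11 = "u1 $ I * u1 $ J" and ?p22 = "u2 $ I * u2 $ J" and ?p12 = "u1 $ I * u2 $ J + u2 $ I * u1 $ J"
      have "v I J + v J I = 2 * (S11 * ?p11) + T12 * ?p12 + 2 * (S22 * ?p22)"
        unfolding v_def ha[OF IJ(1)] hb[OF IJ(1)] hc[OF IJ(1)] hd[OF IJ(1)]
          ha[OF IJ(2)] hb[OF IJ(2)] hc[OF IJ(2)] hd[OF IJ(2)] S11_def S22_def T12_def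
        by (simp add: algebra_simps)
      also have "\<dots> = 2 * ((x11*x11 + x21*x21) * ?p11 + (x11*x12 + x21*x22) * ?p12 + (x12*x12 + x22*x22) * ?p22)"
        unfolding xs by (simp add: algebra_simps)
      also have "\<dots> = 2 * (y1 I * y1 J + y2 I * y2 J)"
        unfolding y1_def y2_def by (simp add: algebra_simps)
      finally show ?thesis .
    qed
    have "0 \<le> Re (Tw N Gs v v)"
      by (rule core[OF GR GH GP sym])
    moreover have "Tw N Gs v v < 0" using neg tr unfolding N_def by simp
    ultimately show False by (simp add: less_complex_def)
  qed
qed


end
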